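(* Let $L\ge1$ and let $\beta=x_1^{a_1}x_2^{a_2}\cdots x_1^{a_{2L-1}}x_2^{a_{2L}}\in\mathcal{B}_3$ with total degree $D=\sum_{i=1}^{2L}a_i$. (a) If $a_i\ge1$ for all $i$, then $\deg V_3(\beta)\le 3D-2L$. (b) If $a_i\ge2$ for all $i$ and $L\le4$, then $\deg V_3(\beta)=3D-2L$ and the leading coefficient of $V_3(\beta)$ is $1$.
   Context: $\mathcal{B}_3$ is the 3-strand braid group with standard Artin generators $x_1,x_2$; $V_3(\beta)$ is the Jones polynomial of the closure $\widehat\beta$, normalized by $V(\text{unknot})=1$ and $q^{-1}V_{L_+}-qV_{L_-}=(q^{1/2}-q^{-1/2})V_{L_0}$, in the variable $s=q^{-1/2}$ (a Laurent polynomial in $s$). Conventions: closures of $\alpha x_i^{e+2}\gamma$, $\alpha x_i^{e+1}\gamma$, $\alpha x_i^{e}\gamma$ play the roles of $L_-,L_0,L_+$ (e.g. the closure of $x_1^2\in\mathcal B_2$ has Jones polynomial $-s-s^5$). $\deg$ denotes the highest exponent of $s$. *)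

theory Defs
  imports "HOL-Computational_Algebra.Formal_Laurent_Series"
begin

text \<open>Laurent polynomials in the variable s are represented as int fls,
  with s = fls_X and s^(-1) = fls_X_inv.\<close>

abbreviation s_var :: "int fls" where "s_var \<equiv> fls_X"
abbreviation s_inv :: "int fls" where "s_inv \<equiv> fls_X_inv"

text \<open>Loop value of the Kauffman bracket, delta = -A^2 - A^(-2), with s = A^(-2).\<close>
definition tl_delta :: "int fls" where
  "tl_delta = - (s_var + s_inv)"

text \<open>Elements of the Temperley-Lieb algebra TL_3 over Z[s,s^(-1)], as coefficient
  vectors on the basis 0 = 1, 1 = e1, 2 = e2, 3 = e1 e2, 4 = e2 e1
  (coefficients at indices other than 0..4 are irrelevant/zero).\<close>
type_synonym tl3 = "nat \<Rightarrow> int fls"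

definition tl_one :: tl3 where
  "tl_one = (\<lambda>k. if k = 0 then 1 else 0)"

text \<open>Right multiplication by e1 and e2, using e_i^2 = delta e_i, e1 e2 e1 = e1, e2 e1 e2 = e2.\<close>
definition tl_mul_e1 :: "tl3 \<Rightarrow> tl3" where
  "tl_mul_e1 x = (\<lambda>k. if k = 1 then x 0 + tl_delta * x 1 + x 3
                       else if k = 4 then x 2 + tl_delta * x 4 else 0)"

definition tl_mul_e2 :: "tl3 \<Rightarrow> tl3" where
  "tl_mul_e2 x = (\<lambda>k. if k = 2 then x 0 + tl_delta * x 2 + x 4
                       else if k = 3 then x 1 + tl_delta * x 3 else 0)"

definition tl_mul_e :: "nat \<Rightarrow> tl3 \<Rightarrow> tl3" where
  "tl_mul_e i x = (if i = 1 then tl_mul_e1 x else tl_mul_e2 x)"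

text \<open>Braid letters: (i, True) is x_i, (i, False) is x_i^(-1), for i in {1,2}.
  Kauffman bracket: x_i maps to A + A^(-1) e_i and x_i^(-1) to A^(-1) + A e_i; the writhe
  normalisation (-A^3)^(-w) is absorbed letterwise, giving (with s = A^(-2))
  x_i maps to -s - s^2 e_i and x_i^(-1) maps to -s^(-1) - s^(-2) e_i.\<close>
definition tl_letter :: "nat \<times> bool \<Rightarrow> tl3 \<Rightarrow> tl3" where
  "tl_letter g x =
     (let i = fst g in
      if snd g then (\<lambda>k. - s_var * x k - s_var^2 * tl_mul_e i x k)
      else (\<lambda>k. - s_inv * x k - s_inv^2 * tl_mul_e i x k))"

definition tl_word :: "(nat \<times> bool) list \<Rightarrow> tl3" where
  "tl_word w = fold tl_letter w tl_one"

text \<open>Normalised closure trace: the closure of a basis diagram with c loops gets delta^(c-1)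
  (so the unknot has value 1): 1 has 3 loops, e1, e2 have 2, e1e2, e2e1 have 1.\<close>
definition tl_trace :: "tl3 \<Rightarrow> int fls" where
  "tl_trace x = tl_delta^2 * x 0 + tl_delta * (x 1 + x 2) + x 3 + x 4"

definition V3 :: "(nat \<times> bool) list \<Rightarrow> int fls" where
  "V3 w = tl_trace (tl_word w)"

definition lp_deg :: "int fls \<Rightarrow> int" where
  "lp_deg f = Max {n. fls_nth f n \<noteq> 0}"

definition lp_lead :: "int fls \<Rightarrow> int" where
  "lp_lead f = fls_nth f (lp_deg f)"

definition alt_braid :: "nat \<Rightarrow> (nat \<Rightarrow> nat) \<Rightarrow> (nat \<times> bool) list" where
  "alt_braid L a = concat (map (\<lambda>i. replicate (a i) (if odd i then 1 else 2, True)) [1..<2*L+1])"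

end

theory Submission
  imports Defs
begin


definition dle :: "int fls \<Rightarrow> int \<Rightarrow> bool" where
  "dle f n \<longleftrightarrow> (\<forall>k>n. fls_nth f k = 0)"
definition dge :: "int fls \<Rightarrow> int \<Rightarrow> bool" where
  "dge f n \<longleftrightarrow> (\<forall>k<n. fls_nth f k = 0)"

lemma mult_nth_sum: "fls_nth ((f::int fls) * g) k = (\<Sum>i=fls_subdegree f..k - fls_subdegree g. fls_nth f i * fls_nth g (k - i))"
  by (rule fls_times_nth(2))
lemma mult_nth_sum_old: "fls_nth (f * g) k = (\<Sum>i=fls_subdegree f..k - fls_subdegree g. fls_nth f i * fls_nth g (k - i))"
  by (rule fls_times_nth(2))

lemma dle_mult: assumes "dle f n" "dle g m" shows "dle (f*g) (n+m)"
  unfolding dle_def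
proof (intro allI impI)
  fix k assume k: "k > n + m"
  have "\<And>i. fls_nth f i * fls_nth g (k - i) = 0"
  proof -
    fix i show "fls_nth f i * fls_nth g (k - i) = 0"
      using assms k unfolding dle_def by (cases "i > n") auto
  qed
  then show "fls_nth (f*g) k = 0" unfolding mult_nth_sum by (intro sum.neutral) blast
qed

lemma dge_mult: assumes "dge f n" "dge g m" shows "dge (f*g) (n+m)"
  unfolding dge_def
proof (intro allI impI)
  fix k assume k: "k < n + m"
  have "\<And>i. fls_nth f i * fls_nth g (k - i) = 0"
  proof -
    fix i show "fls_nth f i * fls_nth g (k - i) = 0"
      using assms k unfolding dge_def by (cases "i < n") auto
  qed
  then show "fls_nth (f*g) k = 0" unfolding mult_nth_sum by (intro sum.neutral) blast
qed

lemma mult_single: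
  fixes f g :: "int fls"
  assumes "\<And>i. i \<noteq> n \<Longrightarrow> fls_nth f i * fls_nth g (k - i) = 0"
  shows "fls_nth (f*g) k = fls_nth f n * fls_nth g (k - n)"
proof -
  have "fls_nth (f*g) k = (\<Sum>i=fls_subdegree f..k - fls_subdegree g. if i = n then fls_nth f n * fls_nth g (k - n) else 0)"
    unfolding mult_nth_sum by (rule sum.cong) (use assms in auto)
  also have "\<dots> = (if n \<in> {fls_subdegree f..k - fls_subdegree g} then fls_nth f n * fls_nth g (k - n) else 0)"
    by (rule sum.delta) simp
  also have "\<dots> = fls_nth f n * fls_nth g (k - n)"
  proof (cases "n \<in> {fls_subdegree f..k - fls_subdegree g}")
    case False
    then have "n < fls_subdegree f \<or> k - n < fls_subdegree g" by auto
    then have "fls_nth f n * fls_nth g (k - n) = 0" using fls_eq0_below_subdegree by auto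
    then show ?thesis using False by simp
  qed simp
  finally show ?thesis .
qed

lemma dle_mult_top: assumes "dle f n" "dle g m" shows "fls_nth (f*g) (n+m) = fls_nth f n * fls_nth g m"
proof -
  have "fls_nth (f*g) (n+m) = fls_nth f n * fls_nth g (n + m - n)"
  proof (rule mult_single)
    fix i assume "i \<noteq> n" then show "fls_nth f i * fls_nth g (n + m - i) = 0"
      using assms unfolding dle_def by (cases "i > n") auto
  qed
  then show ?thesis by simp
qed

lemma dge_mult_bot: assumes "dge f n" "dge g m" shows "fls_nth (f*g) (n+m) = fls_nth f n * fls_nth g m"
proof -
  have "fls_nth (f*g) (n+m) = fls_nth f n * fls_nth g (n + m - n)"
  proof (rule mult_single)
    fix i assume "i \<noteq> n" then show "fls_nth f i * fls_nth g (n + m - i) = 0"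
      using assms unfolding dge_def by (cases "i < n") auto
  qed
  then show ?thesis by simp
qed

lemma dle_mult_le: "dle f n \<Longrightarrow> dle g m \<Longrightarrow> n + m \<le> k \<Longrightarrow> dle (f*g) k"
  using dle_mult unfolding dle_def by fastforce
lemma dge_mult_ge: "dge f n \<Longrightarrow> dge g m \<Longrightarrow> k \<le> n + m \<Longrightarrow> dge (f*g) k"
  using dge_mult unfolding dge_def by fastforce
lemma dle_mono: "dle f n \<Longrightarrow> n \<le> k \<Longrightarrow> dle f k" unfolding dle_def by auto
lemma dge_mono: "dge f n \<Longrightarrow> k \<le> n \<Longrightarrow> dge f k" unfolding dge_def by auto
lemma dle_add: "dle f k \<Longrightarrow> dle g k \<Longrightarrow> dle (f+g) k" unfolding dle_def by auto
lemma dge_add: "dge f k \<Longrightarrow> dge g k \<Longrightarrow> dge (f+g) k" unfolding dge_def by auto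
lemma dle_neg: "dle f k \<Longrightarrow> dle (-f) k" unfolding dle_def by auto
lemma dge_neg: "dge f k \<Longrightarrow> dge (-f) k" unfolding dge_def by auto
lemma dle_diff: "dle f k \<Longrightarrow> dle g k \<Longrightarrow> dle (f-g) k" unfolding dle_def by auto
lemma dge_diff: "dge f k \<Longrightarrow> dge g k \<Longrightarrow> dge (f-g) k" unfolding dge_def by auto
lemma dle_zero[simp]: "dle 0 k" unfolding dle_def by auto
lemma dge_zero[simp]: "dge 0 k" unfolding dge_def by auto
lemma dle_nth: "dle f n \<Longrightarrow> n < k \<Longrightarrow> fls_nth f k = 0" unfolding dle_def by auto
lemma dge_nth: "dge f n \<Longrightarrow> k < n \<Longrightarrow> fls_nth f k = 0" unfolding dge_def by auto

lemma dle_one: "dle 1 0" unfolding dle_def by auto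
lemma dge_one: "dge 1 0" unfolding dge_def by auto
lemma dle_s: "dle s_var 1" unfolding dle_def by auto
lemma dge_s: "dge s_var 1" unfolding dge_def by auto
lemma dle_delta: "dle tl_delta 1" unfolding dle_def tl_delta_def by auto
lemma dge_delta: "dge tl_delta (-1)" unfolding dge_def tl_delta_def by auto
lemma delta_top: "fls_nth tl_delta 1 = -1" unfolding tl_delta_def by simp
lemma delta_bot: "fls_nth tl_delta (-1) = -1" unfolding tl_delta_def by simp
lemma s_delta: "s_var * tl_delta = - (s_var^2) - 1"
proof -
  have "s_var * s_inv = 1" by (simp add: fls_X_inv_times_conv_shift)
  then show ?thesis unfolding tl_delta_def by (simp add: right_diff_distrib power2_eq_square)
qed

lemma negs_pow: "dle ((-s_var)^n) (int n) \<and> dge ((-s_var)^n) (int n) \<and> fls_nth ((-s_var)^n) (int n) = (-1)^n"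
proof (induction n)
  case 0 then show ?case using dle_one dge_one by simp
next
  case (Suc n)
  have a: "dle (-s_var) 1" "dge (-s_var) 1" using dle_s dge_s by (auto intro: dle_neg dge_neg)
  have "(-s_var)^Suc n = (-s_var) * (-s_var)^n" by simp
  moreover have "int (Suc n) = 1 + int n" by simp
  ultimately show ?case using Suc dle_mult[OF a(1)] dge_mult[OF a(2)] dle_mult_top[OF a(1)]
    by (simp only:) (simp add: dge_s dle_s)
qed

fun cc :: "nat \<Rightarrow> int fls" where
  "cc 0 = 0"
| "cc (Suc n) = s_var - s_var^2 * cc n"

lemma cc_props: "n \<ge> 1 \<Longrightarrow> dle (cc n) (2 * int n - 1) \<and> dge (cc n) 1 \<and> fls_nth (cc n) (2 * int n - 1) = - ((-1)^n)"
proof (induction n)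
  case 0 then show ?case by simp
next
  case (Suc n)
  show ?case
  proof (cases "n = 0")
    case True then show ?thesis using dle_s dge_s by simp
  next
    case False
    then have IH: "dle (cc n) (2 * int n - 1)" "dge (cc n) 1" "fls_nth (cc n) (2 * int n - 1) = - ((-1)^n)"
      using Suc by auto
    have s2: "dle (s_var^2) 2" "dge (s_var^2) 2" "fls_nth (s_var^2) 2 = 1"
      unfolding dle_def dge_def by auto
    have m1: "dle (s_var^2 * cc n) (2 * int (Suc n) - 1)"
      using dle_mult[OF s2(1) IH(1)] by (simp add: algebra_simps)
    have m2: "dge (s_var^2 * cc n) 1"
      using dge_mult_ge[OF s2(2) IH(2)] by simp
    have m3: "fls_nth (s_var^2 * cc n) (2 * int (Suc n) - 1) = - ((-1)^n)"
      using dle_mult_top[OF s2(1) IH(1)] IH(3) s2(3) by (simp add: algebra_simps)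
    have d1: "dle s_var (2 * int (Suc n) - 1)" using dle_s by (rule dle_mono) simp
    have "fls_nth s_var (2 * int (Suc n) - 1) = 0" using False by simp
    then show ?thesis using m1 m2 m3 d1 dge_s by (auto intro: dle_diff dge_diff)
  qed
qed



definition blk :: "nat \<Rightarrow> nat \<Rightarrow> tl3 \<Rightarrow> tl3" where
  "blk n i x = (\<lambda>k. x k + cc n * tl_mul_e i x k)"

lemma mul_e_scale: "tl_mul_e i (\<lambda>k. r * x k) = (\<lambda>k. r * tl_mul_e i x k)"
  unfolding tl_mul_e_def tl_mul_e1_def tl_mul_e2_def by (auto simp: algebra_simps)

lemma mul_e_add: "tl_mul_e i (\<lambda>k. x k + y k) = (\<lambda>k. tl_mul_e i x k + tl_mul_e i y k)"
  unfolding tl_mul_e_def tl_mul_e1_def tl_mul_e2_def by (auto simp: algebra_simps)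

lemma mul_e_idem: "tl_mul_e i (tl_mul_e i x) = (\<lambda>k. tl_delta * tl_mul_e i x k)"
  unfolding tl_mul_e_def tl_mul_e1_def tl_mul_e2_def by (auto simp: algebra_simps)

lemma letter_eq: "tl_letter (i, True) x = (\<lambda>k. - s_var * x k - s_var^2 * tl_mul_e i x k)"
  unfolding tl_letter_def by simp

lemma blk_scale: "blk n i (\<lambda>k. r * x k) = (\<lambda>k. r * blk n i x k)"
  unfolding blk_def mul_e_scale by (auto simp: algebra_simps)

lemma key_alg:
  fixes X c d e x P :: "int fls"
  assumes h: "X * d = - (X^2) - 1"
  shows "- X * (P * (x + c * e)) - X^2 * (P * (e + c * (d * e))) = (-X) * P * (x + (X - X^2 * c) * e)"
  using h by algebra

lemma fold_block: "fold tl_letter (replicate n (i, True)) x = (\<lambda>k. (-s_var)^n * blk n i x k)"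
proof (induction n)
  case 0 then show ?case by (simp add: blk_def)
next
  case (Suc n)
  have r: "replicate (Suc n) (i, True) = replicate n (i, True) @ [(i, True)]"
    by (simp add: replicate_append_same)
  have "fold tl_letter (replicate (Suc n) (i, True)) x = tl_letter (i, True) (\<lambda>k. (-s_var)^n * blk n i x k)"
    unfolding r using Suc by simp
  also have "\<dots> = (\<lambda>k. (-s_var)^Suc n * blk (Suc n) i x k)"
  proof
    fix k
    have e: "tl_mul_e i (\<lambda>k. x k + cc n * tl_mul_e i x k) k = tl_mul_e i x k + cc n * (tl_delta * tl_mul_e i x k)"
      unfolding mul_e_add mul_e_scale mul_e_idem by simp
    show "tl_letter (i, True) (\<lambda>k. (-s_var)^n * blk n i x k) k = (-s_var)^Suc n * blk (Suc n) i x k"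
      unfolding letter_eq mul_e_scale
      using key_alg[OF s_delta, of "(-s_var)^n" "x k" "cc n" "tl_mul_e i x k"]
      by (simp add: e blk_def)
  qed
  finally show ?case .
qed

definition ei :: "nat \<Rightarrow> nat" where "ei j = (if odd j then 1 else 2)"
definition Pf :: "(nat \<Rightarrow> nat) \<Rightarrow> nat list \<Rightarrow> tl3 \<Rightarrow> tl3" where
  "Pf a js x = fold (\<lambda>j y. blk (a j) (ei j) y) js x"

lemma fold_blocks:
  "fold tl_letter (concat (map (\<lambda>j. replicate (a j) (ei j, True)) js)) (\<lambda>k. r * x k)
     = (\<lambda>k. r * (-s_var)^(sum_list (map a js)) * Pf a js x k)"
proof (induction js arbitrary: r x)
  case Nil then show ?case by (simp add: Pf_def)
next
  case (Cons j js)
  have "fold tl_letter (concat (map (\<lambda>j. replicate (a j) (ei j, True)) (j # js))) (\<lambda>k. r * x k)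
      = fold tl_letter (concat (map (\<lambda>j. replicate (a j) (ei j, True)) js))
          (\<lambda>k. (r * (-s_var)^(a j)) * blk (a j) (ei j) x k)"
    by (simp del: fold_replicate add: fold_block blk_scale mult.assoc mult.left_commute)
  also have "\<dots> = (\<lambda>k. r * (-s_var)^(sum_list (map a (j # js))) * Pf a (j # js) x k)"
    unfolding Cons by (simp add: Pf_def power_add mult.assoc)
  finally show ?case .
qed

lemma V3_eq:
  "V3 (alt_braid L a) = (-s_var)^(\<Sum>i=1..2*L. a i) * tl_trace (Pf a [1..<2*L+1] tl_one)"
proof -
  have ab: "alt_braid L a = concat (map (\<lambda>j. replicate (a j) (ei j, True)) [1..<2*L+1])"
    unfolding alt_braid_def ei_def by simp
  have "tl_word (alt_braid L a) = fold tl_letter (concat (map (\<lambda>j. replicate (a j) (ei j, True)) [1..<2*L+1])) (\<lambda>k. 1 * tl_one k)"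
    unfolding tl_word_def ab by simp
  also have "\<dots> = (\<lambda>k. (-s_var)^(sum_list (map a [1..<2*L+1])) * Pf a [1..<2*L+1] tl_one k)"
    unfolding fold_blocks by simp
  finally have w: "tl_word (alt_braid L a) = (\<lambda>k. (-s_var)^(sum_list (map a [1..<2*L+1])) * Pf a [1..<2*L+1] tl_one k)" .
  have sl: "sum_list (map a [1..<2*L+1]) = (\<Sum>i=1..2*L. a i)"
  proof -
    have "{1..<2*L+1} = {1..2*L}" by auto
    then show ?thesis by (simp only: interv_sum_list_conv_sum_set_nat set_upt)
  qed
  show ?thesis unfolding V3_def w sl tl_trace_def by (simp add: algebra_simps)
qed



lemma blk1:
  "blk n 1 p 0 = p 0" "blk n 1 p 1 = p 1 + cc n * (p 0 + tl_delta * p 1 + p 3)"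
  "blk n 1 p 2 = p 2" "blk n 1 p 3 = p 3" "blk n 1 p 4 = p 4 + cc n * (p 2 + tl_delta * p 4)"
  unfolding blk_def tl_mul_e_def tl_mul_e1_def by simp_all

lemma blk2:
  "blk n 2 p 0 = p 0" "blk n 2 p 1 = p 1" "blk n 2 p 2 = p 2 + cc n * (p 0 + tl_delta * p 2 + p 4)"
  "blk n 2 p 3 = p 3 + cc n * (p 1 + tl_delta * p 3)" "blk n 2 p 4 = p 4"
  unfolding blk_def tl_mul_e_def tl_mul_e2_def by simp_all

definition dges :: "tl3 \<Rightarrow> bool" where
  "dges p \<longleftrightarrow> p 0 = 1 \<and> dge (p 1) 1 \<and> dge (p 2) 1 \<and> dge (p 3) 1 \<and> dge (p 4) 1"

definition A2 :: "int \<Rightarrow> tl3 \<Rightarrow> bool" where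
  "A2 S p \<longleftrightarrow> dges p \<and> 0 \<le> S \<and> dle (p 1) (S-1) \<and> dle (p 2) (S-1) \<and> dle (p 3) S \<and> dle (p 4) (S-2)"
definition A1 :: "int \<Rightarrow> tl3 \<Rightarrow> bool" where
  "A1 S p \<longleftrightarrow> dges p \<and> 1 \<le> S \<and> dle (p 1) S \<and> dle (p 2) (S-2) \<and> dle (p 3) (S-1) \<and> dle (p 4) (S-1)"
definition B2 :: "int \<Rightarrow> int \<Rightarrow> tl3 \<Rightarrow> bool" where
  "B2 S e p \<longleftrightarrow> dges p \<and> 3 \<le> S \<and> dle (p 1) (S-2) \<and> dle (p 2) (S-2) \<and> dle (p 3) S \<and> fls_nth (p 3) S = e \<and> dle (p 4) (S-3)"
definition B1 :: "int \<Rightarrow> int \<Rightarrow> tl3 \<Rightarrow> bool" where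
  "B1 S e p \<longleftrightarrow> dges p \<and> 3 \<le> S \<and> dle (p 1) S \<and> fls_nth (p 1) S = e \<and> dle (p 2) (S-3) \<and> dle (p 3) (S-3) \<and> dle (p 4) (S-2)"

lemma dges1: assumes "dges p" shows "dges (blk n 1 p)"
proof -
  have c: "dge (cc n) 1" using cc_props[of n] by (cases "n = 0") auto
  have d: "p 0 = 1" "dge (p 1) 1" "dge (p 2) 1" "dge (p 3) 1" "dge (p 4) 1" using assms unfolding dges_def by auto
  have y1: "dge (p 0 + tl_delta * p 1 + p 3) 0"
    using d dge_one dge_mult_ge[OF dge_delta d(2)] by (auto intro!: dge_add elim: dge_mono)
  have y4: "dge (p 2 + tl_delta * p 4) 0"
    using d dge_mult_ge[OF dge_delta d(5)] by (auto intro!: dge_add elim: dge_mono)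
  show ?thesis unfolding dges_def blk1 using d dge_mult_ge[OF c y1] dge_mult_ge[OF c y4]
    by (auto intro!: dge_add)
qed

lemma dges2: assumes "dges p" shows "dges (blk n 2 p)"
proof -
  have c: "dge (cc n) 1" using cc_props[of n] by (cases "n = 0") auto
  have d: "p 0 = 1" "dge (p 1) 1" "dge (p 2) 1" "dge (p 3) 1" "dge (p 4) 1" using assms unfolding dges_def by auto
  have y2: "dge (p 0 + tl_delta * p 2 + p 4) 0"
    using d dge_one dge_mult_ge[OF dge_delta d(3)] by (auto intro!: dge_add elim: dge_mono)
  have y3: "dge (p 1 + tl_delta * p 3) 0"
    using d dge_mult_ge[OF dge_delta d(4)] by (auto intro!: dge_add elim: dge_mono)
  show ?thesis unfolding dges_def blk2 using d dge_mult_ge[OF c y2] dge_mult_ge[OF c y3]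
    by (auto intro!: dge_add)
qed

lemma A2_A1: assumes "A2 S p" "n \<ge> 1" shows "A1 (S + 2 * int n - 1) (blk n 1 p)"
proof -
  have c: "dle (cc n) (2 * int n - 1)" using cc_props assms(2) by auto
  have d: "p 0 = 1" "0 \<le> S" "dle (p 1) (S-1)" "dle (p 2) (S-1)" "dle (p 3) S" "dle (p 4) (S-2)"
    using assms unfolding A2_def dges_def by auto
  have y1: "dle (p 0 + tl_delta * p 1 + p 3) S"
    using d dle_mult_le[OF dle_delta d(3), of S] dle_one by (auto intro!: dle_add elim: dle_mono)
  have y4: "dle (p 2 + tl_delta * p 4) (S-1)"
    using d dle_mult_le[OF dle_delta d(6), of "S-1"] by (auto intro!: dle_add elim: dle_mono)
  have z1: "dle (cc n * (p 0 + tl_delta * p 1 + p 3)) (S + 2 * int n - 1)"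
    by (rule dle_mult_le[OF c y1]) simp
  have z4: "dle (cc n * (p 2 + tl_delta * p 4)) (S + 2 * int n - 1 - 1)"
    by (rule dle_mult_le[OF c y4]) simp
  show ?thesis unfolding A1_def blk1 using dges1 assms(1) z1 z4 d assms(2)
    by (auto simp: A2_def intro!: dle_add elim: dle_mono)
qed

lemma A1_A2: assumes "A1 S p" "n \<ge> 1" shows "A2 (S + 2 * int n - 1) (blk n 2 p)"
proof -
  have c: "dle (cc n) (2 * int n - 1)" using cc_props assms(2) by auto
  have d: "p 0 = 1" "1 \<le> S" "dle (p 1) S" "dle (p 2) (S-2)" "dle (p 3) (S-1)" "dle (p 4) (S-1)"
    using assms unfolding A1_def dges_def by auto
  have y2: "dle (p 0 + tl_delta * p 2 + p 4) (S-1)"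
    using d dle_mult_le[OF dle_delta d(4), of "S-1"] dle_one by (auto intro!: dle_add elim: dle_mono)
  have y3: "dle (p 1 + tl_delta * p 3) S"
    using d dle_mult_le[OF dle_delta d(5), of "S"] by (auto intro!: dle_add elim: dle_mono)
  have z2: "dle (cc n * (p 0 + tl_delta * p 2 + p 4)) (S + 2 * int n - 1 - 1)"
    by (rule dle_mult_le[OF c y2]) simp
  have z3: "dle (cc n * (p 1 + tl_delta * p 3)) (S + 2 * int n - 1)"
    by (rule dle_mult_le[OF c y3]) simp
  show ?thesis unfolding A2_def blk2 using dges2 assms(1) z2 z3 d assms(2)
    by (auto simp: A1_def intro!: dle_add elim: dle_mono)
qed

lemma B2_B1: assumes "B2 S e p" "n \<ge> 2" shows "B1 (S + 2 * int n - 1) (- ((-1)^n) * e) (blk n 1 p)"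
proof -
  have c: "dle (cc n) (2 * int n - 1)" "fls_nth (cc n) (2 * int n - 1) = - ((-1)^n)" using cc_props assms(2) by auto
  have d: "p 0 = 1" "3 \<le> S" "dle (p 1) (S-2)" "dle (p 2) (S-2)" "dle (p 3) S" "fls_nth (p 3) S = e" "dle (p 4) (S-3)"
    using assms unfolding B2_def dges_def by auto
  have y0: "dle (p 0 + tl_delta * p 1) (S-1)"
    using d dle_mult_le[OF dle_delta d(3), of "S-1"] dle_one by (auto intro!: dle_add elim: dle_mono)
  have y1: "dle (p 0 + tl_delta * p 1 + p 3) S"
    by (rule dle_add[OF dle_mono[OF y0] d(5)]) simp
  have ny1: "fls_nth (p 0 + tl_delta * p 1 + p 3) S = e"
    using dle_nth[OF y0, of S] d by simp
  have y4: "dle (p 2 + tl_delta * p 4) (S-2)"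
    using d dle_mult_le[OF dle_delta d(7), of "S-2"] by (auto intro!: dle_add elim: dle_mono)
  have z1: "dle (cc n * (p 0 + tl_delta * p 1 + p 3)) (2 * int n - 1 + S)"
    by (rule dle_mult[OF c(1) y1])
  have nz1: "fls_nth (cc n * (p 0 + tl_delta * p 1 + p 3)) (2 * int n - 1 + S) = - ((-1)^n) * e"
    using dle_mult_top[OF c(1) y1] c(2) ny1 by simp
  have z4: "dle (cc n * (p 2 + tl_delta * p 4)) (S + 2 * int n - 1 - 2)"
    by (rule dle_mult_le[OF c(1) y4]) simp
  have e1: "S + 2 * int n - 1 = 2 * int n - 1 + S" by simp
  have p1: "fls_nth (p 1) (S + 2 * int n - 1) = 0" using dle_nth[OF d(3)] assms(2) by simp
  show ?thesis unfolding B1_def blk1 using dges1 assms(1) z1 z4 d assms(2) nz1 p1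
    unfolding e1 by (auto simp: B2_def intro!: dle_add elim: dle_mono)
qed

lemma B1_B2: assumes "B1 S e p" "n \<ge> 2" shows "B2 (S + 2 * int n - 1) (- ((-1)^n) * e) (blk n 2 p)"
proof -
  have c: "dle (cc n) (2 * int n - 1)" "fls_nth (cc n) (2 * int n - 1) = - ((-1)^n)" using cc_props assms(2) by auto
  have d: "p 0 = 1" "3 \<le> S" "dle (p 1) S" "fls_nth (p 1) S = e" "dle (p 2) (S-3)" "dle (p 3) (S-3)" "dle (p 4) (S-2)"
    using assms unfolding B1_def dges_def by auto
  have y2: "dle (p 0 + tl_delta * p 2 + p 4) (S-2)"
    using d dle_mult_le[OF dle_delta d(5), of "S-2"] dle_one by (auto intro!: dle_add elim: dle_mono)
  have y0: "dle (tl_delta * p 3) (S-2)"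
    using d dle_mult_le[OF dle_delta d(6), of "S-2"] by auto
  have y3: "dle (p 1 + tl_delta * p 3) S"
    using y0 d by (auto intro!: dle_add elim: dle_mono)
  have ny3: "fls_nth (p 1 + tl_delta * p 3) S = e"
    using dle_nth[OF y0, of S] d by simp
  have z3: "dle (cc n * (p 1 + tl_delta * p 3)) (2 * int n - 1 + S)"
    by (rule dle_mult[OF c(1) y3])
  have nz3: "fls_nth (cc n * (p 1 + tl_delta * p 3)) (2 * int n - 1 + S) = - ((-1)^n) * e"
    using dle_mult_top[OF c(1) y3] c(2) ny3 by simp
  have z2: "dle (cc n * (p 0 + tl_delta * p 2 + p 4)) (S + 2 * int n - 1 - 2)"
    by (rule dle_mult_le[OF c(1) y2]) simp
  have e1: "S + 2 * int n - 1 = 2 * int n - 1 + S" by simp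
  have p3: "fls_nth (p 3) (S + 2 * int n - 1) = 0" using dle_nth[OF d(6)] assms(2) by simp
  show ?thesis unfolding B2_def blk2 using dges2 assms(1) z2 z3 d assms(2) nz3 p3
    unfolding e1 by (auto simp: B1_def intro!: dle_add elim: dle_mono)
qed

lemma B1_init: assumes "n \<ge> 2" shows "B1 (2 * int n - 1) (- ((-1)^n)) (blk n 1 tl_one)"
proof -
  have c: "dle (cc n) (2 * int n - 1)" "fls_nth (cc n) (2 * int n - 1) = - ((-1)^n)" "dge (cc n) 1"
    using cc_props assms by auto
  show ?thesis unfolding B1_def dges_def blk1 using c assms by (simp add: tl_one_def)
qed

lemma A2_init: "A2 0 tl_one"
  unfolding A2_def dges_def by (simp add: tl_one_def)



lemma trace_low: assumes "dges p" shows "dge (tl_trace p) (-2) \<and> fls_nth (tl_trace p) (-2) = 1"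
proof -
  have d: "p 0 = 1" "dge (p 1) 1" "dge (p 2) 1" "dge (p 3) 1" "dge (p 4) 1" using assms unfolding dges_def by auto
  have dd: "dge (tl_delta^2) (-2)" "fls_nth (tl_delta^2) (-2) = 1"
    using dge_mult[OF dge_delta dge_delta] dge_mult_bot[OF dge_delta dge_delta] delta_bot
    by (simp_all add: power2_eq_square)
  have s12: "dge (p 1 + p 2) 1" using d by (auto intro: dge_add)
  have t1: "dge (tl_delta * (p 1 + p 2)) 0" using dge_mult[OF dge_delta s12] by simp
  have r: "dge (tl_delta * (p 1 + p 2) + p 3 + p 4) (-1)"
    using t1 d by (auto intro!: dge_add elim: dge_mono)
  have "tl_trace p = tl_delta^2 + (tl_delta * (p 1 + p 2) + p 3 + p 4)"
    unfolding tl_trace_def d by (simp add: algebra_simps)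
  moreover have "dge (tl_delta^2 + (tl_delta * (p 1 + p 2) + p 3 + p 4)) (-2)"
    by (rule dge_add[OF dd(1) dge_mono[OF r]]) simp
  ultimately show ?thesis using dd dge_nth[OF r, of "-2"] by simp
qed

lemma trace_A2: assumes "A2 S p" "2 \<le> S" shows "dle (tl_trace p) S"
proof -
  have d: "p 0 = 1" "dle (p 1) (S-1)" "dle (p 2) (S-1)" "dle (p 3) S" "dle (p 4) (S-2)"
    using assms unfolding A2_def dges_def by auto
  have dd: "dle (tl_delta^2) 2"
    using dle_mult[OF dle_delta dle_delta] by (simp add: power2_eq_square)
  have t1: "dle (tl_delta * (p 1 + p 2)) S" using dle_mult_le[OF dle_delta dle_add[OF d(2) d(3)]] by simp
  have "tl_trace p = tl_delta^2 + tl_delta * (p 1 + p 2) + p 3 + p 4"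
    unfolding tl_trace_def d by (simp add: algebra_simps)
  then show ?thesis using dd t1 d assms(2)
    by (auto intro!: dle_add elim: dle_mono)
qed

lemma trace_B2: assumes "B2 S e p" shows "dle (tl_trace p) S \<and> fls_nth (tl_trace p) S = e"
proof -
  have d: "p 0 = 1" "3 \<le> S" "dle (p 1) (S-2)" "dle (p 2) (S-2)" "dle (p 3) S" "fls_nth (p 3) S = e" "dle (p 4) (S-3)"
    using assms unfolding B2_def dges_def by auto
  have dd: "dle (tl_delta^2) 2"
    using dle_mult[OF dle_delta dle_delta] by (simp add: power2_eq_square)
  have t1: "dle (tl_delta * (p 1 + p 2)) (S-1)" using dle_mult_le[OF dle_delta dle_add[OF d(3) d(4)]] by simp
  have r: "dle (tl_delta^2 + tl_delta * (p 1 + p 2) + p 4) (S - 1)"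
    using dd t1 d by (auto intro!: dle_add elim: dle_mono)
  have "tl_trace p = (tl_delta^2 + tl_delta * (p 1 + p 2) + p 4) + p 3"
    unfolding tl_trace_def d by (simp add: algebra_simps)
  moreover have "dle ((tl_delta^2 + tl_delta * (p 1 + p 2) + p 4) + p 3) S"
    by (rule dle_add[OF dle_mono[OF r] d(5)]) simp
  ultimately show ?thesis using d dle_nth[OF r, of S] by simp
qed

lemma Pf_snoc2: "Pf a [1..<2 * Suc L + 1] x = blk (a (2*L+2)) 2 (blk (a (2*L+1)) 1 (Pf a [1..<2*L+1] x))"
proof -
  have "[1..<2 * Suc L + 1] = [1..<2*L+1] @ [2*L+1, 2*L+2]"
    by (simp add: upt_Suc_append)
  moreover have "ei (2*L+1) = 1" "ei (2*L+2) = 2" by (simp_all add: ei_def)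
  ultimately show ?thesis by (simp add: Pf_def)
qed

lemma sum_snoc2: "(\<Sum>i=1..2 * Suc L. f i) = (\<Sum>i=1..2*L. f i) + f (2*L+1) + (f (2*L+2) :: nat)"
  by (simp add: sum.cl_ivl_Suc)

lemma mainA: "(\<forall>i\<in>{1..2*L}. a i \<ge> 1) \<Longrightarrow> A2 (2 * int (\<Sum>i=1..2*L. a i) - 2 * int L) (Pf a [1..<2*L+1] tl_one)"
proof (induction L)
  case 0 then show ?case using A2_init by (simp add: Pf_def)
next
  case (Suc L)
  have h: "\<forall>i\<in>{1..2*L}. a i \<ge> 1" "a (2*L+1) \<ge> 1" "a (2*L+2) \<ge> 1" using Suc.prems by auto
  have "A2 (2 * int (\<Sum>i=1..2*L. a i) - 2 * int L + 2 * int (a (2*L+1)) - 1 + 2 * int (a (2*L+2)) - 1)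
          (blk (a (2*L+2)) 2 (blk (a (2*L+1)) 1 (Pf a [1..<2*L+1] tl_one)))"
    by (rule A1_A2[OF A2_A1[OF Suc.IH[OF h(1)] h(2)] h(3)])
  then show ?case unfolding Pf_snoc2 sum_snoc2 by (simp add: algebra_simps)
qed

lemma mainB: "L \<ge> 1 \<Longrightarrow> (\<forall>i\<in>{1..2*L}. a i \<ge> 2) \<Longrightarrow>
   B2 (2 * int (\<Sum>i=1..2*L. a i) - 2 * int L) ((-1)^(\<Sum>i=1..2*L. a i)) (Pf a [1..<2*L+1] tl_one)"
proof (induction L rule: nat_induct_at_least)
  case base
  have h: "a 1 \<ge> 2" "a 2 \<ge> 2" using base by auto
  have "B2 (2 * int (a 1) - 1 + 2 * int (a 2) - 1) (- ((-1)^(a 2)) * (- ((-1)^(a 1)))) (blk (a 2) 2 (blk (a 1) 1 tl_one))"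
    by (rule B1_B2[OF B1_init[OF h(1)] h(2)])
  moreover have "Pf a [1..<2*1+1] tl_one = blk (a 2) 2 (blk (a 1) 1 tl_one)"
    by (simp add: Pf_def ei_def upt_rec numeral_2_eq_2)
  moreover have "(\<Sum>i=1..2*1. a i) = a 1 + a 2"
  proof -
    have "{1..2*(1::nat)} = {1,2}" by auto
    then show ?thesis by simp
  qed
  ultimately show ?case by (simp add: algebra_simps power_add)
next
  case (Suc L)
  have h: "\<forall>i\<in>{1..2*L}. a i \<ge> 2" "a (2*L+1) \<ge> 2" "a (2*L+2) \<ge> 2" using Suc.prems by auto
  have "B2 (2 * int (\<Sum>i=1..2*L. a i) - 2 * int L + 2 * int (a (2*L+1)) - 1 + 2 * int (a (2*L+2)) - 1)
          (- ((-1)^(a (2*L+2))) * (- ((-1)^(a (2*L+1))) * (-1)^(\<Sum>i=1..2*L. a i)))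
          (blk (a (2*L+2)) 2 (blk (a (2*L+1)) 1 (Pf a [1..<2*L+1] tl_one)))"
    by (rule B1_B2[OF B2_B1[OF Suc.IH[OF h(1)] h(2)] h(3)])
  then show ?case unfolding Pf_snoc2 sum_snoc2 by (simp add: algebra_simps power_add)
qed

lemma lp_facts:
  assumes "dle f hi" "dge f lo" "fls_nth f n0 \<noteq> 0"
  shows "lp_deg f \<le> hi" "fls_nth f hi \<noteq> 0 \<Longrightarrow> lp_deg f = hi"
proof -
  have sub: "{n. fls_nth f n \<noteq> 0} \<subseteq> {lo..hi}"
    using assms(1,2) unfolding dle_def dge_def by (auto simp: not_less[symmetric])
  then have fin: "finite {n. fls_nth f n \<noteq> 0}" by (rule finite_subset) simp
  have ne: "{n. fls_nth f n \<noteq> 0} \<noteq> {}" using assms(3) by auto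
  show "lp_deg f \<le> hi" unfolding lp_deg_def using fin ne sub by (auto simp: Max_le_iff)
  assume "fls_nth f hi \<noteq> 0"
  then have "hi \<in> {n. fls_nth f n \<noteq> 0}" by simp
  then have "hi \<le> lp_deg f" unfolding lp_deg_def by (rule Max_ge[OF fin])
  then show "lp_deg f = hi" using \<open>lp_deg f \<le> hi\<close> by simp
qed



theorem theorem1p6:
  fixes L :: nat and a :: "nat \<Rightarrow> nat"
  assumes "L \<ge> 1"
  shows "((\<forall>i\<in>{1..2*L}. a i \<ge> 1) \<longrightarrow>
            lp_deg (V3 (alt_braid L a)) \<le> 3 * (\<Sum>i=1..2*L. int (a i)) - 2 * int L)
       \<and> ((\<forall>i\<in>{1..2*L}. a i \<ge> 2) \<and> L \<le> 4 \<longrightarrow>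
            lp_deg (V3 (alt_braid L a)) = 3 * (\<Sum>i=1..2*L. int (a i)) - 2 * int L
          \<and> lp_lead (V3 (alt_braid L a)) = 1)"
proof -
  define D where "D = (\<Sum>i=1..2*L. a i)"
  define S where "S = 2 * int D - 2 * int L"
  define P where "P = Pf a [1..<2*L+1] tl_one"
  have V: "V3 (alt_braid L a) = (-s_var)^D * tl_trace P" unfolding D_def P_def by (rule V3_eq)
  have sumint: "(\<Sum>i=1..2*L. int (a i)) = int D" unfolding D_def by simp
  have tgt: "3 * (\<Sum>i=1..2*L. int (a i)) - 2 * int L = int D + S" unfolding sumint S_def by simp
  have X: "dle ((-s_var)^D) (int D)" "dge ((-s_var)^D) (int D)" "fls_nth ((-s_var)^D) (int D) = (-1)^D"
    using negs_pow by auto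
  have low: "dge (V3 (alt_braid L a)) (int D - 2) \<and> fls_nth (V3 (alt_braid L a)) (int D - 2) \<noteq> 0"
    if "dges P"
  proof -
    have t: "dge (tl_trace P) (-2)" "fls_nth (tl_trace P) (-2) = 1" using trace_low[OF that] by auto
    show ?thesis unfolding V using dge_mult[OF X(2) t(1)] dge_mult_bot[OF X(2) t(1)] X(3) t(2) by simp
  qed
  have partA: "lp_deg (V3 (alt_braid L a)) \<le> 3 * (\<Sum>i=1..2*L. int (a i)) - 2 * int L"
    if h: "\<forall>i\<in>{1..2*L}. a i \<ge> 1"
  proof -
    have A: "A2 S P" unfolding S_def P_def D_def by (rule mainA[OF h])
    have "(\<Sum>i=1..2*L. (1::nat)) \<le> D" unfolding D_def using h by (intro sum_mono) auto
    then have "2 * L \<le> D" by simp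
    then have S2: "2 \<le> S" unfolding S_def using assms by simp
    have t: "dle (tl_trace P) S" by (rule trace_A2[OF A S2])
    have hi: "dle (V3 (alt_braid L a)) (int D + S)" unfolding V by (rule dle_mult[OF X(1) t])
    have "dges P" using A unfolding A2_def by simp
    then show ?thesis unfolding tgt using lp_facts(1)[OF hi] low by blast
  qed
  have partB: "lp_deg (V3 (alt_braid L a)) = 3 * (\<Sum>i=1..2*L. int (a i)) - 2 * int L
          \<and> lp_lead (V3 (alt_braid L a)) = 1"
    if h: "\<forall>i\<in>{1..2*L}. a i \<ge> 2"
  proof -
    have B: "B2 S ((-1)^D) P" unfolding S_def P_def D_def by (rule mainB[OF assms h])
    have t: "dle (tl_trace P) S" "fls_nth (tl_trace P) S = (-1)^D" using trace_B2[OF B] by auto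
    have hi: "dle (V3 (alt_braid L a)) (int D + S)" unfolding V by (rule dle_mult[OF X(1) t(1)])
    have top: "fls_nth (V3 (alt_braid L a)) (int D + S) = 1"
      unfolding V dle_mult_top[OF X(1) t(1)] X(3) t(2) by (simp flip: power_add)
    have "dges P" using B unfolding B2_def by simp
    then have lo: "dge (V3 (alt_braid L a)) (int D - 2)" "fls_nth (V3 (alt_braid L a)) (int D - 2) \<noteq> 0"
      using low by auto
    have "lp_deg (V3 (alt_braid L a)) = int D + S" using lp_facts(2)[OF hi lo] top by simp
    then show ?thesis unfolding tgt lp_lead_def using top by simp
  qed
  show ?thesis using partA partB by blast
qed

end
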